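(* Let $G$ and $H$ be finite simple graphs without isolated vertices, of orders $n$ and $m$ respectively (with $n,m\ge 2$). Then \[ \gamma_{2t}(G\Box H)\ge\tfrac{3}{2}\min\{n,m\}. \]
   Context: For a graph $G=(V,E)$, a set $S\subseteq V$ is a total $2$-dominating set if every vertex of $V$ (including those in $S$) is adjacent to at least $2$ vertices of $S$; $\gamma_{2t}(G)$ is the minimum cardinality of such a set. $G\Box H$ denotes the Cartesian product: vertex set $V(G)\times V(H)$, with $(u_1,v_1)\sim(u_2,v_2)$ iff either $u_1=u_2$ and $v_1\sim v_2$, or $v_1=v_2$ and $u_1\sim u_2$. *)

theory Defs
  imports Complex_Main
begin

definition simple_graph :: "'a set \<Rightarrow> ('a \<Rightarrow> 'a \<Rightarrow> bool) \<Rightarrow> bool" where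
  "simple_graph V E \<longleftrightarrow> finite V \<and> (\<forall>u v. E u v \<longrightarrow> u \<in> V \<and> v \<in> V)
     \<and> (\<forall>u v. E u v \<longrightarrow> E v u) \<and> (\<forall>v. \<not> E v v)"

definition no_isolated :: "'a set \<Rightarrow> ('a \<Rightarrow> 'a \<Rightarrow> bool) \<Rightarrow> bool" where
  "no_isolated V E \<longleftrightarrow> (\<forall>v\<in>V. \<exists>u. E v u)"

definition cart_edges :: "('a \<Rightarrow> 'a \<Rightarrow> bool) \<Rightarrow> ('b \<Rightarrow> 'b \<Rightarrow> bool)
    \<Rightarrow> ('a \<times> 'b) \<Rightarrow> ('a \<times> 'b) \<Rightarrow> bool" where
  "cart_edges E F = (\<lambda>(u1, v1) (u2, v2). (u1 = u2 \<and> F v1 v2) \<or> (v1 = v2 \<and> E u1 u2))"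

definition total_2_dominating :: "'a set \<Rightarrow> ('a \<Rightarrow> 'a \<Rightarrow> bool) \<Rightarrow> 'a set \<Rightarrow> bool" where
  "total_2_dominating V E S \<longleftrightarrow> S \<subseteq> V \<and> (\<forall>v\<in>V. card {u\<in>S. E v u} \<ge> 2)"

definition gamma_2t :: "'a set \<Rightarrow> ('a \<Rightarrow> 'a \<Rightarrow> bool) \<Rightarrow> nat" where
  "gamma_2t V E = Min (card ` {S. total_2_dominating V E S})"

end

theory Submission
  imports Defs
begin

lemma recip_bound:
  fixes c r :: nat
  assumes "c \<ge> 1" "r \<ge> 1" "c + r \<ge> 4"
  shows "1 / real c + 1 / real r \<le> 4/3"
proof -
  consider "c = 1" | "c = 2" | "c \<ge> 3" using assms by linarith
  then show ?thesis
  proof cases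
    case 1
    then have "r \<ge> 3" using assms by simp
    then have "1 / real r \<le> 1/3" by (simp add: field_simps)
    then show ?thesis using 1 by simp
  next
    case 2
    then have "r \<ge> 2" using assms by simp
    then have "1 / real r \<le> 1/2" by (simp add: field_simps)
    then show ?thesis using 2 by simp
  next
    case 3
    then have "1 / real c \<le> 1/3" by (simp add: field_simps)
    moreover have "1 / real r \<le> 1" using assms by (simp add: field_simps)
    ultimately show ?thesis by simp
  qed
qed

lemma key:
  fixes V :: "'a set" and E :: "'a \<Rightarrow> 'a \<Rightarrow> bool"
    and W :: "'b set" and F :: "'b \<Rightarrow> 'b \<Rightarrow> bool"
  assumes G: "simple_graph V E" and H: "simple_graph W F"
    and S: "total_2_dominating (V \<times> W) (cart_edges E F) S"
  shows "3 / 2 * real (min (card V) (card W)) \<le> real (card S)"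
proof -
  have fV: "finite V" and fW: "finite W" using G H by (auto simp: simple_graph_def)
  have irE: "\<And>v. \<not> E v v" using G by (auto simp: simple_graph_def)
  have irF: "\<And>v. \<not> F v v" using H by (auto simp: simple_graph_def)
  have SVW: "S \<subseteq> V \<times> W" using S by (auto simp: total_2_dominating_def)
  have dom: "\<And>x. x \<in> V \<times> W \<Longrightarrow> card {y\<in>S. cart_edges E F x y} \<ge> 2"
    using S by (auto simp: total_2_dominating_def)
  define col where "col u = {w. (u,w) \<in> S}" for u
  define row where "row w = {u. (u,w) \<in> S}" for w
  define c where "c u = card (col u)" for u
  define r where "r w = card (row w)" for w
  have fcol: "finite (col u)" for u
    using finite_subset[of "col u" W] SVW fW by (auto simp: col_def)
  have frow: "finite (row w)" for w
    using finite_subset[of "row w" V] SVW fV by (auto simp: row_def)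
  have fact1: "2 + (if (u,w) \<in> S then 2 else 0) \<le> r w + c u" if uw: "u \<in> V" "w \<in> W" for u w
  proof -
    have sub: "{y\<in>S. cart_edges E F (u,w) y} \<subseteq>
        ((\<lambda>u'. (u',w)) ` (row w - {u})) \<union> ((\<lambda>w'. (u,w')) ` (col u - {w}))"
    proof
      fix y assume y: "y \<in> {y\<in>S. cart_edges E F (u,w) y}"
      obtain a b where ab: "y = (a,b)" by fastforce
      from y ab have yS: "(a,b) \<in> S" and ed: "(u = a \<and> F w b) \<or> (w = b \<and> E u a)"
        by (auto simp: cart_edges_def)
      from ed show "y \<in> ((\<lambda>u'. (u',w)) ` (row w - {u})) \<union> ((\<lambda>w'. (u,w')) ` (col u - {w}))"
      proof
        assume "u = a \<and> F w b"
        then have "b \<noteq> w" "a = u" using irF by auto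
        then show ?thesis using yS ab by (auto simp: col_def)
      next
        assume "w = b \<and> E u a"
        then have "a \<noteq> u" "b = w" using irE by auto
        then show ?thesis using yS ab by (auto simp: row_def)
      qed
    qed
    have "2 \<le> card {y\<in>S. cart_edges E F (u,w) y}" using dom uw by auto
    also have "\<dots> \<le> card (((\<lambda>u'. (u',w)) ` (row w - {u})) \<union> ((\<lambda>w'. (u,w')) ` (col u - {w})))"
      using sub by (intro card_mono) (auto intro: fcol frow)
    also have "\<dots> \<le> card ((\<lambda>u'. (u',w)) ` (row w - {u})) + card ((\<lambda>w'. (u,w')) ` (col u - {w}))"
      by (rule card_Un_le)
    also have "\<dots> \<le> card (row w - {u}) + card (col u - {w})"
      by (intro add_mono card_image_le) (auto intro: fcol frow)
    finally have "2 \<le> card (row w - {u}) + card (col u - {w})" .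
    moreover have "card (row w - {u}) = r w - (if (u,w) \<in> S then 1 else 0)"
      unfolding r_def using frow by (simp add: card_Diff_singleton_if row_def)
    moreover have "card (col u - {w}) = c u - (if (u,w) \<in> S then 1 else 0)"
      unfolding c_def using fcol by (simp add: card_Diff_singleton_if col_def)
    moreover have "(u,w) \<in> S \<Longrightarrow> r w \<ge> 1 \<and> c u \<ge> 1"
      unfolding r_def c_def using fcol frow
      by (metis (mono_tags, lifting) One_nat_def Suc_leI card_gt_0_iff col_def empty_iff mem_Collect_eq row_def)
    ultimately show ?thesis by (auto split: if_splits)
  qed
  have Ssig: "S = (SIGMA u:V. col u)" using SVW by (auto simp: col_def)
  have Ssig2: "prod.swap ` S = (SIGMA w:W. row w)" using SVW by (auto simp: row_def)
  have cardc: "card S = (\<Sum>u\<in>V. c u)"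
    unfolding c_def by (subst Ssig) (simp add: fV fcol)
  have cardr: "card S = (\<Sum>w\<in>W. r w)"
  proof -
    have "card S = card (prod.swap ` S)" by (simp add: card_image)
    also have "\<dots> = (\<Sum>w\<in>W. r w)" unfolding r_def Ssig2 by (simp add: fW frow)
    finally show ?thesis .
  qed
  show ?thesis
  proof (cases "\<exists>w\<in>W. r w = 0")
    case True
    then obtain w where w: "w \<in> W" "r w = 0" by auto
    have "\<forall>u\<in>V. 2 \<le> c u" using fact1[OF _ w(1)] w(2) by fastforce
    then have "(\<Sum>u\<in>V. (2::nat)) \<le> (\<Sum>u\<in>V. c u)" by (intro sum_mono) auto
    then have "2 * card V \<le> card S" using cardc by simp
    then show ?thesis by linarith
  next
    case F1: False
    show ?thesis
    proof (cases "\<exists>u\<in>V. c u = 0")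
      case True
      then obtain u where u: "u \<in> V" "c u = 0" by auto
      have "\<forall>w\<in>W. 2 \<le> r w" using fact1[OF u(1)] u(2) by fastforce
      then have "(\<Sum>w\<in>W. (2::nat)) \<le> (\<Sum>w\<in>W. r w)" by (intro sum_mono) auto
      then have "2 * card W \<le> card S" using cardr by simp
      then show ?thesis by linarith
    next
      case F2: False
      have fS: "finite S" using Ssig fV fcol by simp
      have s1: "(\<Sum>s\<in>S. 1 / real (c (fst s))) = real (card V)"
      proof -
        have "(\<Sum>s\<in>S. 1 / real (c (fst s))) = (\<Sum>u\<in>V. \<Sum>w\<in>col u. 1 / real (c u))"
          unfolding Ssig using sum.Sigma[of V col "\<lambda>u w. 1/real(c u)"] fV fcol by (simp add: split_def)
        also have "\<dots> = (\<Sum>u\<in>V. 1)"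
          using F2 by (intro sum.cong) (auto simp: c_def)
        finally show ?thesis by simp
      qed
      have s2: "(\<Sum>s\<in>S. 1 / real (r (snd s))) = real (card W)"
      proof -
        have "(\<Sum>s\<in>S. 1 / real (r (snd s))) = (\<Sum>s\<in>prod.swap ` S. 1 / real (r (fst s)))"
          by (simp add: sum.reindex)
        also have "\<dots> = (\<Sum>w\<in>W. \<Sum>u\<in>row w. 1 / real (r w))"
          unfolding Ssig2 using sum.Sigma[of W row "\<lambda>w u. 1/real(r w)"] fW frow by (simp add: split_def)
        also have "\<dots> = (\<Sum>w\<in>W. 1)"
          using F1 by (intro sum.cong) (auto simp: r_def)
        finally show ?thesis by simp
      qed
      have ineq: "(\<Sum>s\<in>S. 3/4 * (1 / real (c (fst s)) + 1 / real (r (snd s)))) \<le> (\<Sum>s\<in>S. 1)"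
      proof (rule sum_mono)
        fix s assume s: "s \<in> S"
        obtain u w where uw: "s = (u,w)" by fastforce
        have uV: "u \<in> V" and wW: "w \<in> W" using s uw SVW by auto
        have "4 \<le> r w + c u" using fact1[OF uV wW] s uw by simp
        moreover have "c u \<ge> 1" "r w \<ge> 1" using F1 F2 uV wW by auto
        ultimately have "1 / real (c u) + 1 / real (r w) \<le> 4/3"
          by (intro recip_bound) auto
        then show "3/4 * (1 / real (c (fst s)) + 1 / real (r (snd s))) \<le> 1" using uw by simp
      qed
      have "3/4 * (real (card V) + real (card W)) \<le> real (card S)"
      proof -
        have "(\<Sum>s\<in>S. 3/4 * (1 / real (c (fst s)) + 1 / real (r (snd s))))
           = 3/4 * ((\<Sum>s\<in>S. 1 / real (c (fst s))) + (\<Sum>s\<in>S. 1 / real (r (snd s))))"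
          by (simp only: sum_distrib_left[symmetric] sum.distrib)
        then show ?thesis using ineq s1 s2 by simp
      qed
      then show ?thesis by (cases "card V \<le> card W") (simp_all add: min_def)
    qed
  qed
qed

theorem corollary10:
  fixes V :: "'a set" and E :: "'a \<Rightarrow> 'a \<Rightarrow> bool"
    and W :: "'b set" and F :: "'b \<Rightarrow> 'b \<Rightarrow> bool"
  assumes "simple_graph V E" and "no_isolated V E"
    and "simple_graph W F" and "no_isolated W F"
    and "card V \<ge> 2" and "card W \<ge> 2"
  shows "real (gamma_2t (V \<times> W) (cart_edges E F)) \<ge> 3 / 2 * real (min (card V) (card W))"
proof -
  have fV: "finite V" and fW: "finite W" using assms by (auto simp: simple_graph_def)
  have full: "total_2_dominating (V \<times> W) (cart_edges E F) (V \<times> W)"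
    unfolding total_2_dominating_def
  proof (intro conjI ballI)
    fix x assume x: "x \<in> V \<times> W"
    obtain u w where uw: "x = (u,w)" "u \<in> V" "w \<in> W" using x by auto
    obtain u' where u': "E u u'" using assms(2) uw by (auto simp: no_isolated_def)
    obtain w' where w': "F w w'" using assms(4) uw by (auto simp: no_isolated_def)
    have "u' \<in> V" "u' \<noteq> u" using u' assms(1) by (auto simp: simple_graph_def)
    moreover have "w' \<in> W" "w' \<noteq> w" using w' assms(3) by (auto simp: simple_graph_def)
    ultimately have "{(u',w), (u,w')} \<subseteq> {y \<in> V \<times> W. cart_edges E F x y}"
      "card {(u',w), (u,w')} = 2"
      using uw u' w' by (auto simp: cart_edges_def)
    then show "2 \<le> card {y \<in> V \<times> W. cart_edges E F x y}"
      by (metis (no_types, lifting) card_mono fV fW finite_SigmaI finite_subset mem_Collect_eq subsetI)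
  qed simp
  let ?C = "card ` {S. total_2_dominating (V \<times> W) (cart_edges E F) S}"
  have fin: "finite ?C"
  proof -
    have "{S. total_2_dominating (V \<times> W) (cart_edges E F) S} \<subseteq> Pow (V \<times> W)"
      by (auto simp: total_2_dominating_def)
    then show ?thesis using fV fW by (meson finite_Pow_iff finite_SigmaI finite_imageI finite_subset)
  qed
  have ne: "?C \<noteq> {}" using full by auto
  have "gamma_2t (V \<times> W) (cart_edges E F) \<in> ?C"
    unfolding gamma_2t_def using Min_in[OF fin ne] .
  then obtain S where S: "total_2_dominating (V \<times> W) (cart_edges E F) S"
    and eq: "gamma_2t (V \<times> W) (cart_edges E F) = card S" by auto
  show ?thesis using key[OF assms(1) assms(3) S] eq by simp
qed

end
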